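(* There is no continuous map $F\colon \overline{\Delta}\to \overline{\Delta}^2$ which is holomorphic on $\Delta$ and satisfies $F(b\Delta) = b(\Delta^2)$.
   Context: $\Delta=\{z\in\mathbb{C}: |z|<1\}$ is the open unit disc, $\overline{\Delta}$ its closure, $b\Delta$ its boundary (the unit circle), $\Delta^2=\Delta\times\Delta\subset\mathbb{C}^2$ the bidisc and $b(\Delta^2)$ its topological boundary in $\mathbb{C}^2$. *)

theory Defs
  imports "HOL-Complex_Analysis.Complex_Analysis"
begin

end

theory Submission
  imports Defs "HOL-Complex_Analysis.Complex_Analysis"
begin

lemma disk_aux: "cmod (z - \<i>)^2 + 4 * Im z = cmod (z + \<i>)^2"
  unfolding cmod_power2 by (simp add: power2_eq_square algebra_simps)

lemma sq_lt: "(a::real) \<ge> 0 \<Longrightarrow> b \<ge> 0 \<Longrightarrow> a < b \<longleftrightarrow> a^2 < b^2"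
proof
  assume "a \<ge> 0" "b \<ge> 0" "a < b" then show "a^2 < b^2" by (intro power_strict_mono) auto
next
  assume "a \<ge> 0" "b \<ge> 0" "a^2 < b^2" then show "a < b" using power_less_imp_less_base[of a 2 b] by blast
qed

lemma sq_le: "(a::real) \<ge> 0 \<Longrightarrow> b \<ge> 0 \<Longrightarrow> a \<le> b \<longleftrightarrow> a^2 \<le> b^2"
proof
  assume "a \<ge> 0" "b \<ge> 0" "a \<le> b" then show "a^2 \<le> b^2" by (intro power_mono) auto
next
  assume "a \<ge> 0" "b \<ge> 0" "a^2 \<le> b^2" then show "a \<le> b" using power2_le_imp_le[of a b] by blast
qed

lemma disk_lt: "cmod (z - \<i>) < cmod (z + \<i>) \<longleftrightarrow> Im z > 0"
  using sq_lt[OF norm_ge_zero norm_ge_zero, of "z - \<i>" "z + \<i>"] disk_aux[of z] by linarith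

lemma disk_le: "cmod (z - \<i>) \<le> cmod (z + \<i>) \<longleftrightarrow> Im z \<ge> 0"
  using sq_le[OF norm_ge_zero norm_ge_zero, of "z - \<i>" "z + \<i>"] disk_aux[of z] by linarith

lemma disk_eq: "cmod (z - \<i>) = cmod (z + \<i>) \<longleftrightarrow> Im z = 0"
  using disk_lt[of z] disk_le[of z] by linarith

lemma kmod:
  assumes "cmod v = 1" "z + \<i> \<noteq> 0"
  shows "cmod (v * (z - \<i>) / (z + \<i>)) = cmod (z - \<i>) / cmod (z + \<i>)"
  using assms by (simp add: norm_mult norm_divide)

lemma kmod_lt:
  assumes "cmod v = 1" "z + \<i> \<noteq> 0"
  shows "cmod (v * (z - \<i>) / (z + \<i>)) < 1 \<longleftrightarrow> Im z > 0"
  using assms kmod[OF assms] disk_lt[of z] by (simp add: divide_less_eq)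

lemma kmod_eq:
  assumes "cmod v = 1" "z + \<i> \<noteq> 0"
  shows "cmod (v * (z - \<i>) / (z + \<i>)) = 1 \<longleftrightarrow> Im z = 0"
  using assms kmod[OF assms] disk_eq[of z] by (simp add: divide_eq_eq)

lemma kmod_le:
  assumes "cmod v = 1" "z + \<i> \<noteq> 0"
  shows "cmod (v * (z - \<i>) / (z + \<i>)) \<le> 1 \<longleftrightarrow> Im z \<ge> 0"
  using assms kmod[OF assms] disk_le[of z] by (simp add: divide_le_eq)

lemma kinv:
  assumes "v \<noteq> 0" "w \<noteq> v"
  shows "v * (\<i> * (v + w) / (v - w) - \<i>) / (\<i> * (v + w) / (v - w) + \<i>) = w"
    and "\<i> * (v + w) / (v - w) + \<i> \<noteq> 0"
proof -
  have d: "v - w \<noteq> 0" using assms by simp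
  have n: "\<i> * (v + w) / (v - w) - \<i> = 2 * \<i> * w / (v - w)"
    using d by (simp add: divide_simps) (simp add: algebra_simps)
  have dn: "\<i> * (v + w) / (v - w) + \<i> = 2 * \<i> * v / (v - w)"
    using d by (simp add: divide_simps) (simp add: algebra_simps)
  show "\<i> * (v + w) / (v - w) + \<i> \<noteq> 0"
    unfolding dn using d assms by simp
  show "v * (\<i> * (v + w) / (v - w) - \<i>) / (\<i> * (v + w) / (v - w) + \<i>) = w"
    unfolding n dn using d assms by (simp add: divide_simps)
qed

lemma real_mob:
  assumes "cmod v = 1" "cmod w = 1"
  shows "\<i> * (v + w) / (v - w) \<in> \<real>"
proof (cases "v = w")
  case True then show ?thesis by simp
next
  case False
  have v0: "v \<noteq> 0" "w \<noteq> 0" using assms by auto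
  have "v * cnj v = 1" "w * cnj w = 1" using assms complex_norm_square
    by (metis power_one of_real_1)+
  then have cv: "cnj v = 1 / v" "cnj w = 1/w" using v0 by (auto simp: field_simps)
  have "cnj (\<i> * (v + w) / (v - w)) = \<i> * (v + w) / (v - w)"
    using False v0 by (simp add: cv field_simps)
  then show ?thesis using Reals_cnj_iff by blast
qed

lemma key:
  fixes f g :: "complex \<Rightarrow> complex"
  assumes cf: "continuous_on (cball 0 1) f" and cg: "continuous_on (cball 0 1) g"
    and hg: "g holomorphic_on ball 0 1"
    and bd: "\<And>\<zeta>. \<zeta> \<in> sphere 0 1 \<Longrightarrow> cmod (f \<zeta>) < 1 \<Longrightarrow> cmod (g \<zeta>) = 1"
    and z0: "\<zeta>0 \<in> sphere 0 1" "cmod (f \<zeta>0) < 1" "g \<zeta>0 = -1"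
    and lim: "\<zeta>0 islimpt {\<zeta>\<in>sphere 0 1. g \<zeta> = -1}"
  shows "\<forall>w\<in>cball 0 1. g w = -1"
proof -
  define v where "v = - \<zeta>0"
  have v1: "cmod v = 1" using z0 by (simp add: v_def)
  have v0: "v \<noteq> 0" using v1 by auto
  define k where "k = (\<lambda>z. v * (z - \<i>) / (z + \<i>))"
  define kinv where "kinv = (\<lambda>w. \<i> * (v + w) / (v - w))"
  define m where "m = (\<lambda>w::complex. \<i> * (1 + w) / (1 - w))"
  have k0: "k 0 = \<zeta>0" by (simp add: k_def v_def field_simps)
  have kinv0: "kinv \<zeta>0 = 0" by (simp add: kinv_def v_def)
  obtain d1 where d1: "d1 > 0" "\<And>w. w \<in> cball 0 1 \<Longrightarrow> dist w \<zeta>0 < d1 \<Longrightarrow> dist (f w) (f \<zeta>0) < 1 - cmod (f \<zeta>0)"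
    using cf z0 unfolding continuous_on_iff
    by (metis diff_gt_0_iff_gt mem_cball_0 mem_sphere_0 order_refl)
  obtain d2 where d2: "d2 > 0" "\<And>w. w \<in> cball 0 1 \<Longrightarrow> dist w \<zeta>0 < d2 \<Longrightarrow> dist (g w) (g \<zeta>0) < 1"
    using cg z0 unfolding continuous_on_iff
    by (metis mem_cball_0 mem_sphere_0 order_refl zero_less_one)
  define \<delta> where "\<delta> = min d1 d2"
  have \<delta>: "\<delta> > 0" "\<And>w. w \<in> cball 0 1 \<Longrightarrow> dist w \<zeta>0 < \<delta> \<Longrightarrow> cmod (f w) < 1 \<and> cmod (g w + 1) < 1"
  proof -
    show "\<delta> > 0" using d1 d2 by (simp add: \<delta>_def)
    fix w assume w: "w \<in> cball 0 1" "dist w \<zeta>0 < \<delta>"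
    have "dist (f w) (f \<zeta>0) < 1 - cmod (f \<zeta>0)" using d1 w by (simp add: \<delta>_def)
    then have "cmod (f w) < 1" by (metis add.commute dist_norm less_diff_eq norm_triangle_sub order_le_less_trans)
    moreover have "cmod (g w + 1) < 1" using d2 w z0 by (simp add: \<delta>_def dist_norm)
    ultimately show "cmod (f w) < 1 \<and> cmod (g w + 1) < 1" by simp
  qed
  have contk: "isCont k 0" unfolding k_def by (intro continuous_intros) auto
  obtain r0 where r0: "r0 > 0" "\<And>z. dist z 0 < r0 \<Longrightarrow> dist (k z) \<zeta>0 < \<delta>"
    using contk \<delta>(1) k0 unfolding continuous_at_eps_delta by metis
  define r where "r = min r0 1"
  have r: "r > 0" "r \<le> 1" using r0 by (auto simp: r_def)
  define S where "S = ball (0::complex) r"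
  have Si: "\<And>z. z \<in> S \<Longrightarrow> z + \<i> \<noteq> 0"
  proof
    fix z assume "z \<in> S" "z + \<i> = 0"
    have "z = - \<i>" using \<open>z + \<i> = 0\<close> by (simp add: eq_neg_iff_add_eq_0)
    with \<open>z \<in> S\<close> r show False by (simp add: S_def)
  qed
  have kS: "\<And>z. z \<in> S \<Longrightarrow> dist (k z) \<zeta>0 < \<delta>" using r0 by (simp add: S_def r_def dist_norm)
  have kball: "\<And>z. z + \<i> \<noteq> 0 \<Longrightarrow> Im z > 0 \<Longrightarrow> k z \<in> ball 0 1"
    using kmod_lt[OF v1] by (simp add: k_def)
  have kcball: "\<And>z. z + \<i> \<noteq> 0 \<Longrightarrow> Im z \<ge> 0 \<Longrightarrow> k z \<in> cball 0 1"
    using kmod_le[OF v1] by (simp add: k_def)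
  have ksph: "\<And>z. z + \<i> \<noteq> 0 \<Longrightarrow> Im z = 0 \<Longrightarrow> k z \<in> sphere 0 1"
    using kmod_eq[OF v1] by (simp add: k_def)
  have gne1: "\<And>z. z \<in> S \<Longrightarrow> Im z \<ge> 0 \<Longrightarrow> g (k z) \<noteq> 1"
  proof
    fix z assume "z \<in> S" "Im z \<ge> 0" "g (k z) = 1"
    have "cmod (g (k z) + 1) < 1"
      using \<delta>(2)[OF kcball[OF Si[OF \<open>z \<in> S\<close>] \<open>Im z \<ge> 0\<close>] kS[OF \<open>z \<in> S\<close>]] by blast
    with \<open>g (k z) = 1\<close> show False by simp
  qed
  define H where "H = (\<lambda>z. m (g (k z)))"
  have holH: "H holomorphic_on (S \<inter> {z. 0 < Im z})"
  proof -
    have "k holomorphic_on (S \<inter> {z. 0 < Im z})" unfolding k_def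
      using Si by (intro holomorphic_intros) auto
    then have "(g \<circ> k) holomorphic_on (S \<inter> {z. 0 < Im z})"
      by (rule holomorphic_on_compose_gen[OF _ hg]) (use kball Si in auto)
    moreover have "m holomorphic_on {w. w \<noteq> 1}" unfolding m_def
      by (intro holomorphic_intros) auto
    ultimately have "(m \<circ> (g \<circ> k)) holomorphic_on (S \<inter> {z. 0 < Im z})"
      by (rule holomorphic_on_compose_gen) (use gne1 in auto)
    then show ?thesis by (simp add: H_def o_def)
  qed
  have contH: "continuous_on (S \<inter> {z. 0 \<le> Im z}) H"
  proof -
    have "continuous_on (S \<inter> {z. 0 \<le> Im z}) k" unfolding k_def
      using Si by (intro continuous_intros) auto
    then have c1: "continuous_on (S \<inter> {z. 0 \<le> Im z}) (\<lambda>z. g (k z))"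
      by (rule continuous_on_compose2[OF cg]) (use kcball Si in auto)
    have cm: "continuous_on {w. w \<noteq> 1} m" unfolding m_def
      by (intro continuous_intros) auto
    have "continuous_on (S \<inter> {z. 0 \<le> Im z}) (\<lambda>z. m (g (k z)))"
      by (rule continuous_on_compose2[OF cm c1]) (use gne1 in auto)
    then show ?thesis by (simp add: H_def)
  qed
  have realH: "\<And>z. z \<in> S \<Longrightarrow> z \<in> \<real> \<Longrightarrow> H z \<in> \<real>"
  proof -
    fix z assume z: "z \<in> S" "z \<in> \<real>"
    then have Iz: "Im z = 0" by (simp add: complex_is_Real_iff)
    have sp: "k z \<in> sphere 0 1" using ksph[OF Si[OF z(1)] Iz] .
    then have "cmod (f (k z)) < 1" using \<delta>(2)[OF _ kS[OF z(1)]] by auto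
    then have "cmod (g (k z)) = 1" using bd sp by blast
    then show "H z \<in> \<real>" unfolding H_def m_def using real_mob[of 1 "g (k z)"] by simp
  qed
  define H' where "H' = (\<lambda>z. if 0 \<le> Im z then H z else cnj (H (cnj z)))"
  have cnjS: "cnj ` S \<subseteq> S" by (auto simp: S_def)
  have holH': "H' holomorphic_on S" unfolding H'_def
    by (rule Schwarz_reflection[OF _ cnjS holH contH realH]) (auto simp: S_def)
  define U where "U = {x \<in> S. x \<in> \<real> \<and> H x = 0}"
  have lim0: "0 islimpt U"
    unfolding islimpt_approachable
  proof (intro allI impI)
    fix e :: real assume e: "e > 0"
    have "isCont kinv \<zeta>0" unfolding kinv_def using v1 z0
      by (intro continuous_intros) (auto simp: v_def)
    then obtain d where d: "d > 0" "\<And>w. dist w \<zeta>0 < d \<Longrightarrow> dist (kinv w) 0 < min e r"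
      using kinv0 e r unfolding continuous_at_eps_delta by (metis min_less_iff_conj)
    obtain w where w: "w \<in> {\<zeta>\<in>sphere 0 1. g \<zeta> = -1}" "w \<noteq> \<zeta>0" "dist w \<zeta>0 < min d 1"
      using lim d(1) unfolding islimpt_approachable by (metis min_less_iff_conj zero_less_one)
    have wv: "w \<noteq> v"
    proof
      assume "w = v"
      then have "dist w \<zeta>0 = 2" using z0 by (simp add: v_def dist_norm)
      with w(3) show False by simp
    qed
    have w1: "cmod w = 1" using w by simp
    have x0: "kinv w \<noteq> 0" using wv w(2) by (simp add: kinv_def v_def add_eq_0_iff)
    have xR: "kinv w \<in> \<real>" unfolding kinv_def using real_mob[OF v1 w1] .
    have xd: "dist (kinv w) 0 < min e r" using d(2) w(3) by simp
    then have xS: "kinv w \<in> S" by (simp add: S_def dist_norm)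
    have kk: "k (kinv w) = w" unfolding k_def kinv_def using kinv(1)[OF v0 wv] .
    have "H (kinv w) = 0" unfolding H_def kk m_def using w(1) by simp
    then have "kinv w \<in> U" using xS xR by (simp add: U_def)
    then show "\<exists>x'\<in>U. x' \<noteq> 0 \<and> dist x' 0 < e" using x0 xd by force
  qed
  have H'0: "\<And>z. z \<in> S \<Longrightarrow> H' z = 0"
  proof -
    fix z assume z: "z \<in> S"
    show "H' z = 0"
    proof (rule analytic_continuation[OF holH' _ _ _ _ lim0])
      show "open S" "connected S" by (auto simp: S_def)
      show "U \<subseteq> S" by (auto simp: U_def)
      show "0 \<in> S" using r by (simp add: S_def)
      show "z \<in> S" by (rule z)
      fix u assume "u \<in> U"
      then show "H' u = 0" by (auto simp: U_def H'_def complex_is_Real_iff)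
    qed
  qed
  have gm1: "\<And>z. z \<in> S \<Longrightarrow> Im z > 0 \<Longrightarrow> g (k z) = -1"
  proof -
    fix z assume z: "z \<in> S" "Im z > 0"
    have "H z = 0" using H'0[OF z(1)] z(2) by (simp add: H'_def)
    moreover have "g (k z) \<noteq> 1" using gne1 z by simp
    ultimately show "g (k z) = -1" by (simp add: H_def m_def add_eq_0_iff)
  qed
  define P where "P = {z::complex. 0 < Im z}"
  have Pi: "\<And>z. z \<in> P \<Longrightarrow> z + \<i> \<noteq> 0"
  proof
    fix z assume "z \<in> P" "z + \<i> = 0"
    have "z = - \<i>" using \<open>z + \<i> = 0\<close> by (simp add: eq_neg_iff_add_eq_0)
    with \<open>z \<in> P\<close> show False by (simp add: P_def)
  qed
  have gkP: "\<And>z. z \<in> P \<Longrightarrow> g (k z) + 1 = 0"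
  proof -
    fix z assume z: "z \<in> P"
    have holk: "k holomorphic_on P" unfolding k_def using Pi by (intro holomorphic_intros) auto
    have "(g \<circ> k) holomorphic_on P"
      by (rule holomorphic_on_compose_gen[OF holk hg]) (use kball Pi in \<open>auto simp: P_def\<close>)
    then have hol: "(\<lambda>z. g (k z) + 1) holomorphic_on P"
      by (intro holomorphic_intros) (simp add: o_def)
    define \<xi> where "\<xi> = \<i> * of_real (r/2)"
    have \<xi>: "\<xi> \<in> S \<inter> P" using r by (simp add: \<xi>_def S_def P_def norm_mult)
    have oSP: "open (S \<inter> P)" unfolding S_def P_def by (intro open_Int open_ball open_halfspace_Im_gt)
    show "g (k z) + 1 = 0"
    proof (rule analytic_continuation[OF hol _ _ _ _ open_imp_islimpt[OF oSP \<xi>]])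
      show "open P" unfolding P_def by (rule open_halfspace_Im_gt)
      show "connected P" unfolding P_def by (rule convex_connected[OF convex_halfspace_Im_gt])
      show "S \<inter> P \<subseteq> P" by auto
      show "\<xi> \<in> P" using \<xi> by auto
      show "z \<in> P" by (rule z)
      fix u assume "u \<in> S \<inter> P" then show "g (k u) + 1 = 0" using gm1 by (auto simp: P_def)
    qed
  qed
  have gball: "\<And>w. w \<in> ball 0 1 \<Longrightarrow> g w = -1"
  proof -
    fix w :: complex assume w: "w \<in> ball 0 1"
    have wv: "w \<noteq> v" using w v1 by auto
    have kk: "k (kinv w) = w" unfolding k_def kinv_def using kinv(1)[OF v0 wv] .
    have ne: "kinv w + \<i> \<noteq> 0" unfolding kinv_def using kinv(2)[OF v0 wv] .
    have "cmod (k (kinv w)) < 1" using kk w by simp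
    then have "Im (kinv w) > 0" using kmod_lt[OF v1 ne] by (simp add: k_def)
    then have "g (k (kinv w)) + 1 = 0" using gkP by (simp add: P_def)
    then show "g w = -1" using kk by (simp add: eq_neg_iff_add_eq_0)
  qed
  show ?thesis
  proof
    fix w :: complex assume "w \<in> cball 0 1"
    then show "g w = -1"
      using continuous_constant_on_closure[of "ball 0 1" g "-1" w] cg gball by simp
  qed
qed


theorem proposition2:
  "\<not> (\<exists>F :: complex \<Rightarrow> complex \<times> complex.
      continuous_on (cball 0 1) F \<and>
      F ` cball 0 1 \<subseteq> cball 0 1 \<times> cball 0 1 \<and>
      (fst \<circ> F) holomorphic_on ball 0 1 \<and>
      (snd \<circ> F) holomorphic_on ball 0 1 \<and>
      F ` sphere 0 1 = frontier (ball 0 1 \<times> ball 0 1))"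
proof
  assume "\<exists>F :: complex \<Rightarrow> complex \<times> complex.
      continuous_on (cball 0 1) F \<and>
      F ` cball 0 1 \<subseteq> cball 0 1 \<times> cball 0 1 \<and>
      (fst \<circ> F) holomorphic_on ball 0 1 \<and>
      (snd \<circ> F) holomorphic_on ball 0 1 \<and>
      F ` sphere 0 1 = frontier (ball 0 1 \<times> ball 0 1)"
  then obtain F :: "complex \<Rightarrow> complex \<times> complex" where
    FF: "continuous_on (cball 0 1) F \<and>
      F ` cball 0 1 \<subseteq> cball 0 1 \<times> cball 0 1 \<and>
      (fst \<circ> F) holomorphic_on ball 0 1 \<and>
      (snd \<circ> F) holomorphic_on ball 0 1 \<and>
      F ` sphere 0 1 = frontier (ball 0 1 \<times> ball 0 1)"
    by (rule exE)
  have cF: "continuous_on (cball 0 1) F" using FF by (rule conjunct1)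
  have hg0: "(snd \<circ> F) holomorphic_on ball 0 1" using FF by (elim conjE)
  have sF: "F ` sphere 0 1 = frontier (ball 0 1 \<times> ball 0 1)" using FF by (elim conjE)
  define f where "f = (\<lambda>z. fst (F z))"
  define g where "g = (\<lambda>z. snd (F z))"
  have cf: "continuous_on (cball 0 1) f" unfolding f_def by (intro continuous_intros cF)
  have cg: "continuous_on (cball 0 1) g" unfolding g_def by (intro continuous_intros cF)
  have hg: "g holomorphic_on ball 0 1" using hg0 by (simp add: g_def o_def)
  have fr: "frontier (ball (0::complex) 1 \<times> ball (0::complex) 1) =
      cball 0 1 \<times> cball 0 1 - ball 0 1 \<times> ball 0 1"
    by (simp add: frontier_def closure_Times interior_Times interior_open)
  have bd: "\<And>\<zeta>. \<zeta> \<in> sphere 0 1 \<Longrightarrow> cmod (f \<zeta>) < 1 \<Longrightarrow> cmod (g \<zeta>) = 1"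
  proof -
    fix \<zeta> :: complex assume z: "\<zeta> \<in> sphere 0 1" "cmod (f \<zeta>) < 1"
    have "F \<zeta> \<in> frontier (ball 0 1 \<times> ball 0 1)" using sF z(1) by blast
    then have "F \<zeta> \<in> cball 0 1 \<times> cball 0 1 - ball 0 1 \<times> ball 0 1" using fr by simp
    then have a: "fst (F \<zeta>) \<in> cball 0 1" "snd (F \<zeta>) \<in> cball 0 1"
      "\<not> (fst (F \<zeta>) \<in> ball 0 1 \<and> snd (F \<zeta>) \<in> ball 0 1)"
      by (auto simp: mem_Times_iff)
    have "cmod (snd (F \<zeta>)) \<le> 1" "\<not> (cmod (fst (F \<zeta>)) < 1 \<and> cmod (snd (F \<zeta>)) < 1)"
      using a unfolding mem_cball_0 mem_ball_0 by auto
    then show "cmod (g \<zeta>) = 1" using z(2) unfolding f_def g_def by linarith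
  qed
  have surj: "\<And>p. p \<in> cball 0 1 \<times> cball 0 1 - ball 0 1 \<times> ball 0 1 \<Longrightarrow> \<exists>\<zeta>\<in>sphere 0 1. F \<zeta> = p"
  proof -
    fix p :: "complex \<times> complex" assume "p \<in> cball 0 1 \<times> cball 0 1 - ball 0 1 \<times> ball 0 1"
    then have "p \<in> F ` sphere 0 1" using sF fr by simp
    then show "\<exists>\<zeta>\<in>sphere 0 1. F \<zeta> = p" by blast
  qed
  have notall: "\<not> (\<forall>w\<in>cball 0 1. g w = -1)"
  proof
    assume all: "\<forall>w\<in>cball 0 1. g w = -1"
    obtain \<zeta> where "\<zeta> \<in> sphere 0 1" "F \<zeta> = (0, 1)"
      using surj[of "(0,1)"] by auto
    then have "g \<zeta> = 1" "\<zeta> \<in> cball 0 1" by (auto simp: g_def)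
    then have "g \<zeta> = -1" using all by blast
    then show False using \<open>g \<zeta> = 1\<close> by simp
  qed
  define Z where "Z = {\<zeta>\<in>sphere 0 1. g \<zeta> = -1 \<and> cmod (f \<zeta>) \<le> 1/2}"
  have Zeq: "Z = sphere 0 1 \<inter> (\<lambda>\<zeta>. (g \<zeta>, f \<zeta>)) -` ({-1} \<times> cball 0 (1/2))"
    unfolding Z_def by (auto simp: mem_Times_iff)
  have cgf: "continuous_on (sphere 0 1) (\<lambda>\<zeta>. (g \<zeta>, f \<zeta>))"
    by (intro continuous_on_Pair continuous_on_subset[OF cg sphere_cball] continuous_on_subset[OF cf sphere_cball])
  have clZ: "closed Z" unfolding Zeq
    by (rule continuous_closed_preimage[OF cgf]) (intro closed_Times closed_singleton closed_cball closed_sphere)+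
  have nolim: "\<And>z. \<not> z islimpt Z"
  proof
    fix z assume zl: "z islimpt Z"
    then have zZ: "z \<in> Z" using clZ closed_limpt by blast
    have lz: "z islimpt {\<zeta>\<in>sphere 0 1. g \<zeta> = -1}"
      by (rule islimpt_subset[OF zl]) (auto simp: Z_def)
    have z1: "z \<in> sphere 0 1" "cmod (f z) < 1" "g z = -1" using zZ by (auto simp: Z_def)
    have "\<forall>w\<in>cball 0 1. g w = -1" by (rule key[OF cf cg hg bd z1 lz])
    with notall show False by blast
  qed
  have cZ: "countable Z" by (rule no_limpt_imp_countable[OF nolim])
  have "ball 0 (1/2) \<subseteq> f ` Z"
  proof
    fix z :: complex assume z: "z \<in> ball 0 (1/2)"
    have n1: "cmod (-1::complex) = 1" by simp
    have m1: "(-1::complex) \<in> cball 0 1" "(-1::complex) \<notin> ball 0 1"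
      using n1 unfolding mem_cball_0 mem_ball_0 by simp_all
    have zc: "z \<in> cball 0 1" using z by simp
    have "(z, -1::complex) \<in> cball 0 1 \<times> cball 0 1 - ball 0 1 \<times> ball 0 1"
      using zc m1 by (simp add: mem_Times_iff)
    then obtain \<zeta> where "\<zeta> \<in> sphere 0 1" "F \<zeta> = (z, -1)" using surj by blast
    then have "\<zeta> \<in> Z" "f \<zeta> = z" using z by (auto simp: Z_def f_def g_def)
    then show "z \<in> f ` Z" by blast
  qed
  moreover have "countable (f ` Z)" using cZ by simp
  ultimately have "countable (ball (0::complex) (1/2))" by (rule countable_subset)
  then show False using uncountable_ball[of "1/2" "0::complex"] by simp
qed

end
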